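(* Let $\mathsf{K}$ be the variety of type $\langle\wedge,\vee,\neg,J_2,0,1\rangle$ axiomatised by: - $x\vee x\approx x$; - $x\vee y\approx y\vee x$; - $x\vee(y\vee z)\approx(x\vee y)\vee z$; - $\neg\neg x\approx x$; - $x\wedge y\approx\neg(\neg x\vee\neg y)$; - $x\wedge(\neg x\vee y)\approx x\wedge y$; - $0\vee x\approx x$; - $1\approx\neg0$; - $J_2x\vee\neg J_2x\approx1$; - $x\vee J_2y\approx x\vee J_2(x\vee y)$; - $x\wedge J_2x\approx x$; - $J_2(x\wedge\neg x)\approx0$. Then $\mathsf{K}$ satisfies: (1) $x\vee J_2x\approx x$; (2) $x\approx J_2x\vee(x\wedge\neg x)$; (3) $J_2J_2x\approx J_2x$; (4) $x\vee\neg J_2y\approx x\vee\neg J_2(x\vee y)$. *)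

theory Defs
  imports Main
begin

definition K_algebra ::
  "'a set \<Rightarrow> ('a \<Rightarrow> 'a \<Rightarrow> 'a) \<Rightarrow> ('a \<Rightarrow> 'a \<Rightarrow> 'a) \<Rightarrow> ('a \<Rightarrow> 'a) \<Rightarrow> ('a \<Rightarrow> 'a)
   \<Rightarrow> 'a \<Rightarrow> 'a \<Rightarrow> bool" where
  "K_algebra A meet join neg J z u \<longleftrightarrow>
     (\<forall>x\<in>A. \<forall>y\<in>A. meet x y \<in> A) \<and>
     (\<forall>x\<in>A. \<forall>y\<in>A. join x y \<in> A) \<and>
     (\<forall>x\<in>A. neg x \<in> A) \<and>
     (\<forall>x\<in>A. J x \<in> A) \<and>
     z \<in> A \<and> u \<in> A \<and>
     (\<forall>x\<in>A. join x x = x) \<and>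
     (\<forall>x\<in>A. \<forall>y\<in>A. join x y = join y x) \<and>
     (\<forall>x\<in>A. \<forall>y\<in>A. \<forall>w\<in>A. join x (join y w) = join (join x y) w) \<and>
     (\<forall>x\<in>A. neg (neg x) = x) \<and>
     (\<forall>x\<in>A. \<forall>y\<in>A. meet x y = neg (join (neg x) (neg y))) \<and>
     (\<forall>x\<in>A. \<forall>y\<in>A. meet x (join (neg x) y) = meet x y) \<and>
     (\<forall>x\<in>A. join z x = x) \<and>
     u = neg z \<and>
     (\<forall>x\<in>A. join (J x) (neg (J x)) = u) \<and>
     (\<forall>x\<in>A. \<forall>y\<in>A. join x (J y) = join x (J (join x y))) \<and>
     (\<forall>x\<in>A. meet x (J x) = x) \<and>
     (\<forall>x\<in>A. J (meet x (neg x)) = z)"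

end

theory Submission
  imports Defs
begin

locale Kloc =
  fixes A :: "'a set" and meet join :: "'a \<Rightarrow> 'a \<Rightarrow> 'a"
    and neg J :: "'a \<Rightarrow> 'a" and z u :: 'a
  assumes cm: "\<And>x y. x\<in>A \<Longrightarrow> y\<in>A \<Longrightarrow> meet x y \<in> A"
  and cj: "\<And>x y. x\<in>A \<Longrightarrow> y\<in>A \<Longrightarrow> join x y \<in> A"
  and cn: "\<And>x. x\<in>A \<Longrightarrow> neg x \<in> A"
  and cJ: "\<And>x. x\<in>A \<Longrightarrow> J x \<in> A"
  and cz: "z \<in> A" and cu: "u\<in>A"
  and idem: "\<And>x. x\<in>A \<Longrightarrow> join x x = x"
  and comm: "\<And>x y. x\<in>A \<Longrightarrow> y\<in>A \<Longrightarrow> join x y = join y x"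
  and assoc: "\<And>x y w. x\<in>A \<Longrightarrow> y\<in>A \<Longrightarrow> w\<in>A \<Longrightarrow> join x (join y w) = join (join x y) w"
  and nn: "\<And>x. x\<in>A \<Longrightarrow> neg (neg x) = x"
  and md: "\<And>x y. x\<in>A \<Longrightarrow> y\<in>A \<Longrightarrow> meet x y = neg (join (neg x) (neg y))"
  and ax6: "\<And>x y. x\<in>A \<Longrightarrow> y\<in>A \<Longrightarrow> meet x (join (neg x) y) = meet x y"
  and zj: "\<And>x. x\<in>A \<Longrightarrow> join z x = x"
  and ud: "u = neg z"
  and J1: "\<And>x. x\<in>A \<Longrightarrow> join (J x) (neg (J x)) = u"
  and J2: "\<And>x y. x\<in>A \<Longrightarrow> y\<in>A \<Longrightarrow> join x (J y) = join x (J (join x y))"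
  and J3: "\<And>x. x\<in>A \<Longrightarrow> meet x (J x) = x"
  and J4: "\<And>x. x\<in>A \<Longrightarrow> J (meet x (neg x)) = z"
begin
lemma nm: "x\<in>A \<Longrightarrow> w\<in>A \<Longrightarrow> meet (neg x) (join x w) = meet (neg x) w"
  using ax6[of "neg x" w] nn cn by simp
lemma jn: "x\<in>A \<Longrightarrow> y\<in>A \<Longrightarrow> join x (neg y) = neg (meet (neg x) y)"
proof -
  assume x: "x\<in>A" and y: "y\<in>A"
  have "meet (neg x) y = neg (join x (neg y))" using md[of "neg x" y] nn x y cn by simp
  then show ?thesis using nn x y cn cj by simp
qed
lemma mc: "x\<in>A \<Longrightarrow> y\<in>A \<Longrightarrow> meet x y = meet y x"
  using md[of x y] md[of y x] comm[of "neg x" "neg y"] cn by simp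
lemma bb: "x\<in>A \<Longrightarrow> y\<in>A \<Longrightarrow> join x (meet (neg x) y) = join x y"
proof -
  assume x: "x\<in>A" and y: "y\<in>A"
  have ny: "neg y \<in> A" using y cn by blast
  have "meet (neg x) y = neg (join x (neg y))" using md[of "neg x" y] nn x y cn by simp
  then have "join x (meet (neg x) y) = join x (neg (join x (neg y)))" by simp
  also have "\<dots> = neg (meet (neg x) (join x (neg y)))" using jn[OF x cj[OF x ny]] by simp
  also have "\<dots> = neg (meet (neg x) (neg y))" using nm[OF x ny] by simp
  also have "\<dots> = join x (neg (neg y))" using jn[OF x ny] by simp
  finally show ?thesis using nn[OF y] by simp
qed
lemma aa: "x\<in>A \<Longrightarrow> join (neg x) (neg (J x)) = neg x"
proof -
  assume x: "x\<in>A"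
  have "neg (join (neg x) (neg (J x))) = x" using J3[OF x] md[OF x cJ[OF x]] by simp
  then have "neg (neg (join (neg x) (neg (J x)))) = neg x" by simp
  then show ?thesis using nn cj cn cJ x by simp
qed
lemma g1: "x\<in>A \<Longrightarrow> join x (J x) = x"
proof -
  assume x: "x\<in>A"
  have m: "meet x (neg x) \<in> A" using x cm cn by blast
  have "join x (meet x (neg x)) = x"
    using x mc[of x "neg x"] bb[of x x] idem cn by simp
  then have "join x (J x) = join x (J (meet x (neg x)))"
    using J2[OF x m] by simp
  also have "\<dots> = x" using J4[OF x] comm[OF x cz] zj[OF x] by simp
  finally show ?thesis .
qed
lemma g4: "x\<in>A \<Longrightarrow> y\<in>A \<Longrightarrow> join x (neg (J y)) = join x (neg (J (join x y)))"
proof -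
  assume x: "x\<in>A" and y: "y\<in>A"
  have xy: "join x y \<in> A" using x y cj by blast
  have "meet (neg x) (J y) = meet (neg x) (join x (J y))" using nm[OF x cJ[OF y]] by simp
  also have "\<dots> = meet (neg x) (join x (J (join x y)))" using J2[OF x y] by simp
  also have "\<dots> = meet (neg x) (J (join x y))" using nm[OF x cJ[OF xy]] by simp
  finally show ?thesis using jn[OF x cJ[OF y]] jn[OF x cJ[OF xy]] by simp
qed
lemma g3: "x\<in>A \<Longrightarrow> J (J x) = J x"
proof -
  assume x: "x\<in>A"
  define a where "a = J x"
  define b where "b = J a"
  have a: "a \<in> A" using a_def cJ x by simp
  have b: "b \<in> A" using b_def cJ a by simp
  have na: "neg a \<in> A" and nb: "neg b \<in> A" using a b cn by auto
  have ab: "join a b = a" using g1[OF a] b_def by simp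
  have "meet a b = a" using J3[OF a] b_def by simp
  then have "neg (neg (join (neg a) (neg b))) = neg a" using md[OF a b] by simp
  then have nab: "join (neg a) (neg b) = neg a" using nn na nb cj by simp
  have "meet a (neg b) = meet a (join (neg a) (neg b))" using ax6[OF a nb] by simp
  also have "\<dots> = meet a (neg a)" using nab by simp
  also have "\<dots> = neg (join (neg a) a)" using md[OF a na] nn[OF a] by simp
  also have "\<dots> = z" using J1[OF x] a_def comm[OF na a] ud nn[OF cz] by simp
  finally have e: "meet a (neg b) = z" .
  have "a = join b a" using ab comm[OF a b] by simp
  also have "\<dots> = join b (meet (neg b) a)" using bb[OF b a] by simp
  also have "\<dots> = join b z" using e mc[OF a nb] by simp
  also have "\<dots> = b" using comm[OF b cz] zj[OF b] by simp
  finally show ?thesis using a_def b_def by simp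
qed
lemma g2: "x\<in>A \<Longrightarrow> x = join (J x) (meet x (neg x))"
  proof -
  assume x: "x\<in>A"
  define a where "a = J x"
  have a: "a \<in> A" using a_def cJ x by simp
  have na: "neg a \<in> A" and nx: "neg x \<in> A" using a x cn by auto
  have "meet x (neg a) = meet x (join (neg x) (neg a))" using ax6[OF x na] by simp
  also have "\<dots> = meet x (neg x)" using aa[OF x] a_def by simp
  finally have e: "meet (neg a) x = meet x (neg x)" using mc[OF x na] by simp
  have "x = join a x" using g1[OF x] a_def comm[OF x a] by simp
  also have "\<dots> = join a (meet (neg a) x)" using bb[OF a x] by simp
  finally show ?thesis using e a_def by simp
qed
end

lemma K_to_Kloc: "K_algebra A meet join neg J z u \<Longrightarrow> Kloc A meet join neg J z u"
  unfolding K_algebra_def Kloc_def by (elim conjE, intro conjI allI impI; meson)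

theorem lemma4p2:
  fixes A :: "'a set" and meet join :: "'a \<Rightarrow> 'a \<Rightarrow> 'a"
    and neg J :: "'a \<Rightarrow> 'a" and z u :: 'a
  assumes "K_algebra A meet join neg J z u"
  shows "(\<forall>x\<in>A. join x (J x) = x) \<and>
         (\<forall>x\<in>A. x = join (J x) (meet x (neg x))) \<and>
         (\<forall>x\<in>A. J (J x) = J x) \<and>
         (\<forall>x\<in>A. \<forall>y\<in>A. join x (neg (J y)) = join x (neg (J (join x y))))"
proof -
  interpret Kloc A meet join neg J z u
    by (rule K_to_Kloc[OF assms])
  show ?thesis using g1 g2 g3 g4 by blast
qed

end
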